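(* Consider a multi-sender single-uniprior index-coding instance with binary messages, information-flow graph $\mathcal{G}$ and message graph $\mathcal{U}$, in which each message is known to exactly one sender (i.e., the senders' message sets $\mathcal{M}_1,\dots,\mathcal{M}_S$ partition the message set). Then \[ \tilde{\ell}^*(\mathcal{G},\mathcal{U}) = V_{\mathrm{out}}(\mathcal{G}) - N_{\mathrm{conn}}(\mathcal{G},\mathcal{U}), \] where $N_{\mathrm{conn}}(\mathcal{G},\mathcal{U})$ is the number of message-connected leaf SCCs of $\mathcal{G}$.
   Context: Multi-sender single-uniprior index coding with binary messages: there are $n$ receivers and $n$ independent messages $x_1,\dots,x_n$, each a single bit uniformly distributed on $\{0,1\}$. Receiver $i$ knows $x_i$ a priori and requests a set of messages not containing $x_i$. The information-flow graph is the directed graph $\mathcal{G}=(\mathcal{V},\mathcal{A})$, $\mathcal{V}=\{1,\dots,n\}$, with an arc $(j\to i)$ iff receiver $i$ requests $x_j$. There are $S$ senders; sender $s$ knows a subset $\mathcal{M}_s$ of the messages, and every message is known to some sender. An index code consists of, for each sender $s$, an encoding function mapping the messages in $\mathcal{M}_s$ to $\ell_s$ bits, and for each receiver $i$ a decoding function that, from all senders' outputs together with $x_i$, returns every message requested by $i$, for all message values; its length is $\sum_s \ell_s$. $\tilde{\ell}^*(\mathcal{G},\mathcal{U})$ is the minimum length of an index code for the instance. The message graph $\mathcal{U}$ is the undirected graph on $\mathcal{V}$ with an edge $\{i,j\}$ iff some sender knows both $x_i$ and $x_j$. A leaf vertex of $\mathcal{G}$ has no outgoing arcs; $V_{\mathrm{out}}(\mathcal{G})$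 is the number of non-leaf vertices. A leaf SCC of $\mathcal{G}$ is a strongly connected component with at least two vertices and no arc from it to a vertex outside it. A leaf SCC with vertex set $\mathcal{V}_S$ is message-connected iff the subgraph of $\mathcal{U}$ induced by $\mathcal{V}_S$ is connected. *)

theory Defs
  imports Main
begin

text \<open>Vertices / receivers / messages are 0..<n. The arc set A of the
information-flow graph contains (j, i) iff receiver i requests x_j.\<close>

definition is_index_code ::
  "nat \<Rightarrow> (nat \<times> nat) set \<Rightarrow> nat \<Rightarrow> (nat \<Rightarrow> nat set)
   \<Rightarrow> (nat \<Rightarrow> nat) \<Rightarrow> (nat \<Rightarrow> (nat \<Rightarrow> bool) \<Rightarrow> bool list)
   \<Rightarrow> (nat \<Rightarrow> bool list list \<Rightarrow> bool \<Rightarrow> nat \<Rightarrow> bool) \<Rightarrow> bool" where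
  "is_index_code n A S M l E D \<longleftrightarrow>
     (\<forall>s<S. \<forall>x. length (E s x) = l s) \<and>
     (\<forall>s<S. \<forall>x y. (\<forall>j\<in>M s. x j = y j) \<longrightarrow> E s x = E s y) \<and>
     (\<forall>i<n. \<forall>x. \<forall>j. (j, i) \<in> A \<longrightarrow>
        D i (map (\<lambda>s. E s x) [0..<S]) (x i) j = x j)"

definition index_code_length_achievable ::
  "nat \<Rightarrow> (nat \<times> nat) set \<Rightarrow> nat \<Rightarrow> (nat \<Rightarrow> nat set) \<Rightarrow> nat \<Rightarrow> bool" where
  "index_code_length_achievable n A S M L \<longleftrightarrow>
     (\<exists>l E D. is_index_code n A S M l E D \<and> (\<Sum>s<S. l s) = L)"

definition min_index_code_length ::
  "nat \<Rightarrow> (nat \<times> nat) set \<Rightarrow> nat \<Rightarrow> (nat \<Rightarrow> nat set) \<Rightarrow> nat" where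
  "min_index_code_length n A S M = (LEAST L. index_code_length_achievable n A S M L)"

definition V_out :: "nat \<Rightarrow> (nat \<times> nat) set \<Rightarrow> nat" where
  "V_out n A = card {i \<in> {0..<n}. \<exists>j. (i, j) \<in> A}"

definition is_scc :: "nat \<Rightarrow> (nat \<times> nat) set \<Rightarrow> nat set \<Rightarrow> bool" where
  "is_scc n A C \<longleftrightarrow> C \<subseteq> {0..<n} \<and> C \<noteq> {} \<and>
     (\<forall>u\<in>C. \<forall>v\<in>C. (u, v) \<in> A\<^sup>*) \<and>
     (\<forall>u\<in>C. \<forall>v\<in>{0..<n}. (u, v) \<in> A\<^sup>* \<and> (v, u) \<in> A\<^sup>* \<longrightarrow> v \<in> C)"

definition is_leaf_scc :: "nat \<Rightarrow> (nat \<times> nat) set \<Rightarrow> nat set \<Rightarrow> bool" where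
  "is_leaf_scc n A C \<longleftrightarrow> is_scc n A C \<and> card C \<ge> 2 \<and>
     (\<forall>u\<in>C. \<forall>v. (u, v) \<in> A \<longrightarrow> v \<in> C)"

text \<open>Message graph U: undirected edge {i,j} (i \<noteq> j) iff some sender knows both.\<close>
definition msg_edge :: "nat \<Rightarrow> (nat \<Rightarrow> nat set) \<Rightarrow> nat \<Rightarrow> nat \<Rightarrow> bool" where
  "msg_edge S M i j \<longleftrightarrow> i \<noteq> j \<and> (\<exists>s<S. i \<in> M s \<and> j \<in> M s)"

definition msg_connected :: "nat \<Rightarrow> (nat \<Rightarrow> nat set) \<Rightarrow> nat set \<Rightarrow> bool" where
  "msg_connected S M C \<longleftrightarrow>
     (\<forall>u\<in>C. \<forall>v\<in>C. (u, v) \<in> {(i, j). i \<in> C \<and> j \<in> C \<and> msg_edge S M i j}\<^sup>*)"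

definition N_conn :: "nat \<Rightarrow> (nat \<times> nat) set \<Rightarrow> nat \<Rightarrow> (nat \<Rightarrow> nat set) \<Rightarrow> nat" where
  "N_conn n A S M = card {C. is_leaf_scc n A C \<and> msg_connected S M C}"

end

theory Submission
  imports Defs
begin


locale IC =
  fixes n S :: nat and A :: "(nat \<times> nat) set" and M :: "nat \<Rightarrow> nat set"
  assumes arcs: "A \<subseteq> {0..<n} \<times> {0..<n}"
    and no_loops: "\<forall>i. (i, i) \<notin> A"
    and senders: "\<forall>s<S. M s \<subseteq> {0..<n}"
    and partition: "\<forall>j<n. \<exists>!s. s < S \<and> j \<in> M s"
begin

definition own :: "nat \<Rightarrow> nat" where "own j = (THE s. s < S \<and> j \<in> M s)"

lemma own: "j < n \<Longrightarrow> own j < S \<and> j \<in> M (own j)"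
  unfolding own_def using partition by (metis (mono_tags, lifting) theI)

lemma own_eq: "s < S \<Longrightarrow> j \<in> M s \<Longrightarrow> own j = s"
  unfolding own_def using partition senders
  by (metis (no_types, lifting) atLeastLessThan_iff subsetD the_equality)

lemma arc_lt: "(u, v) \<in> A \<Longrightarrow> u < n \<and> v < n"
  using arcs by auto

lemma reach_lt: "(u, w) \<in> A\<^sup>* \<Longrightarrow> u < n \<Longrightarrow> w < n"
  by (induction rule: rtrancl_induct) (auto dest: arc_lt)

definition NL where "NL = {i \<in> {0..<n}. \<exists>j. (i, j) \<in> A}"
definition K where "K = {C. is_leaf_scc n A C \<and> msg_connected S M C}"
definition R where "R = Min ` K"
definition T where "T = NL - R"

lemma scc_sub: "is_scc n A C \<Longrightarrow> is_scc n A C' \<Longrightarrow> u \<in> C \<Longrightarrow> u \<in> C' \<Longrightarrow> C \<subseteq> C'"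
proof
  fix v assume h: "is_scc n A C" "is_scc n A C'" "u \<in> C" "u \<in> C'" "v \<in> C"
  have "(u, v) \<in> A\<^sup>*" "(v, u) \<in> A\<^sup>*" using h unfolding is_scc_def by blast+
  moreover have "v \<in> {0..<n}" using h unfolding is_scc_def by blast
  ultimately show "v \<in> C'" using h(2,4) unfolding is_scc_def by blast
qed

lemma scc_disj: "is_scc n A C \<Longrightarrow> is_scc n A C' \<Longrightarrow> u \<in> C \<Longrightarrow> u \<in> C' \<Longrightarrow> C = C'"
  using scc_sub by blast

lemma leaf_NL: assumes "is_leaf_scc n A C" shows "C \<subseteq> NL"
proof
  fix u assume u: "u \<in> C"
  have fin: "finite C" using assms unfolding is_leaf_scc_def is_scc_def
    using finite_subset by blast
  have "card C \<ge> 2" using assms unfolding is_leaf_scc_def by simp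
  then obtain v where v: "v \<in> C" "v \<noteq> u"
    by (metis One_nat_def card_le_Suc0_iff_eq fin not_less_eq_eq numeral_2_eq_2 u)
  have "(u, v) \<in> A\<^sup>*" using assms u v unfolding is_leaf_scc_def is_scc_def by blast
  then obtain w where "(u, w) \<in> A" using v(2) by (metis converse_rtranclE)
  then show "u \<in> NL" unfolding NL_def using arc_lt by auto
qed

lemma finK: "finite K"
proof -
  have "K \<subseteq> Pow {0..<n}" unfolding K_def is_leaf_scc_def is_scc_def by auto
  then show ?thesis using finite_subset by blast
qed

lemma K_fin: "C \<in> K \<Longrightarrow> finite C \<and> C \<noteq> {}"
  unfolding K_def is_leaf_scc_def is_scc_def using finite_subset by blast

lemma Min_K: "C \<in> K \<Longrightarrow> Min C \<in> C"
  using K_fin by auto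

lemma K_disj: "C \<in> K \<Longrightarrow> C' \<in> K \<Longrightarrow> u \<in> C \<Longrightarrow> u \<in> C' \<Longrightarrow> C = C'"
  unfolding K_def is_leaf_scc_def using scc_disj by blast

lemma inj_Min: "inj_on Min K"
  by (rule inj_onI) (metis K_disj Min_K)

lemma card_R: "card R = N_conn n A S M"
  unfolding R_def N_conn_def K_def[symmetric] using card_image inj_Min by blast

lemma R_NL: "R \<subseteq> NL"
  unfolding R_def using Min_K leaf_NL unfolding K_def by blast

lemma NL_fin: "finite NL" unfolding NL_def by auto

lemma card_T: "card T = V_out n A - N_conn n A S M"
  unfolding T_def V_out_def NL_def[symmetric] card_R[symmetric]
  by (meson NL_fin R_NL card_Diff_subset finite_subset)

lemma K_own: assumes "C \<in> K" "u \<in> C" shows "own u = own (Min C)"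
proof -
  have mc: "msg_connected S M C" using assms K_def by auto
  have "(Min C, u) \<in> {(i, j). i \<in> C \<and> j \<in> C \<and> msg_edge S M i j}\<^sup>*"
    using mc Min_K assms unfolding msg_connected_def by blast
  then show ?thesis
  proof (induction rule: rtrancl_induct)
    case base then show ?case by simp
  next
    case (step y z)
    then obtain s where "s < S" "y \<in> M s" "z \<in> M s" unfolding msg_edge_def by auto
    then show ?case using step own_eq by metis
  qed
qed

lemma same_own_conn: assumes "\<forall>a\<in>C. \<forall>b\<in>C. own a = own b" "C \<subseteq> {0..<n}"
  shows "msg_connected S M C"
  unfolding msg_connected_def
proof (intro ballI)
  fix u v assume uv: "u \<in> C" "v \<in> C"
  show "(u, v) \<in> {(i, j). i \<in> C \<and> j \<in> C \<and> msg_edge S M i j}\<^sup>*"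
  proof (cases "u = v")
    case False
    have "u < n" "v < n" using uv assms by auto
    then have "msg_edge S M u v" unfolding msg_edge_def using False own assms uv by metis
    then show ?thesis using uv by blast
  qed simp
qed

end


lemma card_Y: "card {ls :: bool list list. length ls = k \<and> (\<forall>s<k. length (ls!s) = l s)} = 2 ^ (\<Sum>s<k. l s)
   \<and> finite {ls :: bool list list. length ls = k \<and> (\<forall>s<k. length (ls!s) = l s)}"
proof (induction k)
  case 0
  have "{ls :: bool list list. length ls = 0 \<and> (\<forall>s<0. length (ls!s) = l s)} = {[]}" by auto
  then show ?case by simp
next
  case (Suc k)
  let ?Y = "\<lambda>k. {ls :: bool list list. length ls = k \<and> (\<forall>s<k. length (ls!s) = l s)}"
  let ?B = "{b :: bool list. set b \<subseteq> UNIV \<and> length b = l k}"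
  have eq: "?Y (Suc k) = (\<lambda>(ls, b). ls @ [b]) ` (?Y k \<times> ?B)"
  proof (intro set_eqI iffI)
    fix ls assume h: "ls \<in> ?Y (Suc k)"
    then have "ls \<noteq> []" by auto
    then have "ls = butlast ls @ [last ls]" by simp
    moreover have "butlast ls \<in> ?Y k" using h by (auto simp: nth_butlast)
    moreover have "last ls = ls ! k" using \<open>ls \<noteq> []\<close> h by (simp add: last_conv_nth)
    then have "last ls \<in> ?B" using h by auto
    ultimately show "ls \<in> (\<lambda>(ls, b). ls @ [b]) ` (?Y k \<times> ?B)"
      by (intro image_eqI[where x="(butlast ls, last ls)"]) simp_all
  next
    fix ls assume "ls \<in> (\<lambda>(ls, b). ls @ [b]) ` (?Y k \<times> ?B)"
    then obtain xs b where xb: "ls = xs @ [b]" "xs \<in> ?Y k" "b \<in> ?B" by auto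
    have "\<forall>s<Suc k. length (ls!s) = l s"
    proof (intro allI impI)
      fix s assume "s < Suc k"
      then consider "s < k" | "s = k" by linarith
      then show "length (ls!s) = l s"
      proof cases
        case 1 then show ?thesis using xb by (simp add: nth_append)
      next
        case 2 then show ?thesis using xb by (simp add: nth_append)
      qed
    qed
    then show "ls \<in> ?Y (Suc k)" using xb by simp
  qed
  have inj: "inj_on (\<lambda>(ls, b). ls @ [b]) (?Y k \<times> ?B)"
    by (rule inj_onI) auto
  have cB: "card ?B = 2 ^ l k" using card_lists_length_eq[of "UNIV :: bool set" "l k"] by (simp add: card_UNIV_bool)
  have fB: "finite ?B" using finite_lists_length_eq[of "UNIV :: bool set" "l k"] by simp
  have fY: "finite (?Y k)" and cY: "card (?Y k) = 2 ^ (\<Sum>s<k. l s)" using Suc by blast+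
  have "card ((\<lambda>(ls, b). ls @ [b]) ` (?Y k \<times> ?B)) = card (?Y k \<times> ?B)"
    using card_image[OF inj] .
  also have "\<dots> = card (?Y k) * card ?B" by (rule card_cartesian_product)
  also have "\<dots> = 2 ^ (\<Sum>s<Suc k. l s)" unfolding cY cB sum.lessThan_Suc power_add ..
  finally have c: "card (?Y (Suc k)) = 2 ^ (\<Sum>s<Suc k. l s)" unfolding eq .
  have "finite (?Y (Suc k))" unfolding eq by (intro finite_imageI finite_cartesian_product fY fB)
  then show ?case using c by blast
qed

lemma code_dep: "is_index_code n A S M l E D \<Longrightarrow> s<S \<Longrightarrow> (\<forall>j\<in>M s. x j = y j) \<Longrightarrow> E s x = E s y"
  unfolding is_index_code_def by simp
lemma code_dec: "is_index_code n A S M l E D \<Longrightarrow> i<n \<Longrightarrow> (j, i) \<in> A \<Longrightarrow> D i (map (\<lambda>s. E s x) [0..<S]) (x i) j = x j"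
  unfolding is_index_code_def by simp
lemma code_len: "is_index_code n A S M l E D \<Longrightarrow> s<S \<Longrightarrow> length (E s x) = l s"
  unfolding is_index_code_def by simp

context IC begin

definition cw :: "(nat \<Rightarrow> (nat \<Rightarrow> bool) \<Rightarrow> bool list) \<Rightarrow> (nat \<Rightarrow> bool) \<Rightarrow> bool list list" where
  "cw E x = map (\<lambda>s. E s x) [0..<S]"

lemma prop1:
  assumes code: "is_index_code n A S M l E D" and eq: "cw E x = cw E y"
    and "x u = y u" "(v, u) \<in> A\<^sup>*"
  shows "x v = y v"
  using assms(4,3)
proof (induction rule: converse_rtrancl_induct)
  case base then show ?case by simp
next
  case (step a b)
  have "b < n" using arc_lt[OF step(1)] by simp
  then have 1: "D b (cw E x) (x b) a = x a" and 2: "D b (cw E y) (y b) a = y a"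
    unfolding cw_def using code_dec[OF code _ step(1)] by simp_all
  have "x b = y b" using step by blast
  then have "D b (cw E x) (x b) a = D b (cw E y) (y b) a" using eq by simp
  then show ?case using 1 2 by simp
qed

lemma hybrid:
  assumes code: "is_index_code n A S M l E D" and eq: "cw E x = cw E y" and a: "a < S"
  shows "cw E (\<lambda>i. if i \<in> M a then x i else y i) = cw E x"
proof -
  let ?z = "\<lambda>i. if i \<in> M a then x i else y i"
  have xy: "\<forall>s<S. E s x = E s y" using eq unfolding cw_def by (simp add: map_eq_conv)
  note dep = code_dep[OF code]
  have "\<forall>s<S. E s ?z = E s x"
  proof (intro allI impI)
    fix s assume s: "s < S"
    show "E s ?z = E s x"
    proof (cases "s = a")
      case True
      show ?thesis by (rule dep) (use s True in auto)
    next
      case False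
      have "\<forall>j\<in>M s. ?z j = y j"
      proof
        fix j assume j: "j \<in> M s"
        have "j \<notin> M a"
        proof
          assume "j \<in> M a" then have "own j = a" using own_eq[OF a] by blast
          then show False using own_eq[OF s j] False by simp
        qed
        then show "?z j = y j" by simp
      qed
      then have "E s ?z = E s y" using dep[OF s] by simp
      then show ?thesis using xy s by simp
    qed
  qed
  then show ?thesis unfolding cw_def by simp
qed

definition reach where "reach w = {v. (w, v) \<in> A\<^sup>*}"

lemma reach_fin: "w < n \<Longrightarrow> reach w \<subseteq> {0..<n}"
  unfolding reach_def using reach_lt by auto

lemma main_inj:
  assumes code: "is_index_code n A S M l E D" and eq: "cw E x = cw E y"
    and out: "\<forall>i. i \<notin> T \<longrightarrow> x i = y i"
  shows "x = y"
proof (rule ccontr)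
  assume "x \<noteq> y"
  then obtain v where v: "x v \<noteq> y v" by auto
  then have "v \<in> T" using out by auto
  then have vn: "v < n" unfolding T_def NL_def by auto
  obtain w where w: "w \<in> reach v" and wmin: "\<forall>w'. w' \<in> reach v \<longrightarrow> card (reach w) \<le> card (reach w')"
    using ex_has_least_nat[of "\<lambda>w. w \<in> reach v" v "\<lambda>w. card (reach w)"] unfolding reach_def by auto
  have wn: "w < n" using w vn reach_lt unfolding reach_def by auto
  have xw: "x w \<noteq> y w" using prop1[OF code eq, of w v] v w unfolding reach_def by auto
  have bk: "\<forall>w'. (w, w') \<in> A\<^sup>* \<longrightarrow> (w', w) \<in> A\<^sup>*"
  proof (intro allI impI, rule ccontr)
    fix w' assume h: "(w, w') \<in> A\<^sup>*" "(w', w) \<notin> A\<^sup>*"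
    have sub: "reach w' \<subseteq> reach w" using h unfolding reach_def by auto
    have "w \<in> reach w - reach w'" using h unfolding reach_def by auto
    then have "reach w' \<subset> reach w" using sub by blast
    moreover have "finite (reach w)" using finite_subset[OF reach_fin[OF wn]] by simp
    ultimately have "card (reach w') < card (reach w)" by (simp add: psubset_card_mono)
    moreover have "w' \<in> reach v" using w h unfolding reach_def by auto
    ultimately show False using wmin by fastforce
  qed
  have "w \<in> T" using xw out by auto
  then obtain w' where w': "(w, w') \<in> A" unfolding T_def NL_def by auto
  have ww': "w' \<noteq> w" using w' no_loops by auto
  let ?C = "reach w"
  have Cn: "?C \<subseteq> {0..<n}" using reach_fin[OF wn] .
  have fC: "finite ?C" using finite_subset[OF Cn] by simp
  have wC: "w \<in> ?C" "w' \<in> ?C" unfolding reach_def using w' by auto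
  have "card ?C \<ge> 2"
  proof -
    have "{w, w'} \<subseteq> ?C" using wC by auto
    then have "card {w, w'} \<le> card ?C" using card_mono[OF fC] by simp
    then show ?thesis using ww' by simp
  qed
  have scc: "is_scc n A ?C"
    unfolding is_scc_def
  proof (intro conjI ballI impI)
    show "?C \<subseteq> {0..<n}" using Cn .
  next
    show "?C \<noteq> {}" using wC by auto
  next
    fix a b assume ab: "a \<in> ?C" "b \<in> ?C"
    then have "(a, w) \<in> A\<^sup>*" "(w, b) \<in> A\<^sup>*" using bk unfolding reach_def by auto
    then show "(a, b) \<in> A\<^sup>*" by (rule rtrancl_trans)
  next
    fix a b assume ab: "a \<in> ?C" "b \<in> {0..<n}" "(a, b) \<in> A\<^sup>* \<and> (b, a) \<in> A\<^sup>*"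
    then have "(w, a) \<in> A\<^sup>*" "(a, b) \<in> A\<^sup>*" unfolding reach_def by auto
    then have "(w, b) \<in> A\<^sup>*" by (rule rtrancl_trans)
    then show "b \<in> ?C" unfolding reach_def by simp
  qed
  have clos: "\<forall>u\<in>?C. \<forall>v. (u, v) \<in> A \<longrightarrow> v \<in> ?C"
    unfolding reach_def by (auto intro: rtrancl.rtrancl_into_rtrancl)
  have leaf: "is_leaf_scc n A ?C"
    unfolding is_leaf_scc_def using scc \<open>card ?C \<ge> 2\<close> clos by blast
  show False
  proof (cases "msg_connected S M ?C")
    case True
    then have "?C \<in> K" unfolding K_def using leaf by auto
    then have "Min ?C \<in> R" "Min ?C \<in> ?C" unfolding R_def using Min_K by auto
    then have "x (Min ?C) = y (Min ?C)" "(w, Min ?C) \<in> A\<^sup>*" using out unfolding T_def reach_def by auto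
    then show False using prop1[OF code eq] xw by blast
  next
    case False
    then obtain a b where ab: "a \<in> ?C" "b \<in> ?C" "own a \<noteq> own b"
      using same_own_conn[OF _ Cn] by blast
    have an: "a < n" "b < n" using ab Cn by auto
    have "w \<notin> M (own a) \<or> w \<notin> M (own b)"
    proof (rule ccontr)
      assume "\<not> (w \<notin> M (own a) \<or> w \<notin> M (own b))"
      then have "own w = own a" "own w = own b" using own_eq own an by blast+
      then show False using ab(3) by simp
    qed
    then obtain c where c: "c \<in> ?C" "w \<notin> M (own c)" using ab by blast
    have cn: "own c < S" "c \<in> M (own c)" using own c Cn by auto
    let ?z = "\<lambda>i. if i \<in> M (own c) then x i else y i"
    have zx: "cw E ?z = cw E x" using hybrid[OF code eq cn(1)] .
    have "?z c = x c" using cn by simp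
    moreover have "(w, c) \<in> A\<^sup>*" using c unfolding reach_def by auto
    ultimately have "?z w = x w" using prop1[OF code zx] by blast
    then show False using c xw by simp
  qed
qed

lemma lower:
  assumes code: "is_index_code n A S M l E D"
  shows "card T \<le> (\<Sum>s<S. l s)"
proof -
  let ?Y = "{ls :: bool list list. length ls = S \<and> (\<forall>s<S. length (ls!s) = l s)}"
  let ?f = "\<lambda>P. cw E (\<lambda>i. i \<in> P)"
  have fT: "finite T" unfolding T_def using NL_fin by auto
  have inj: "inj_on ?f (Pow T)"
  proof (rule inj_onI)
    fix P Q assume h: "P \<in> Pow T" "Q \<in> Pow T" "?f P = ?f Q"
    have "(\<lambda>i. i \<in> P) = (\<lambda>i. i \<in> Q)"
      by (rule main_inj[OF code h(3)]) (use h in auto)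
    then show "P = Q" by (metis Collect_mem_eq)
  qed
  have "?f ` Pow T \<subseteq> ?Y" using code_len[OF code] unfolding cw_def by auto
  then have "card (Pow T) \<le> card ?Y" using card_inj_on_le[OF inj] card_Y by blast
  then have "2 ^ card T \<le> (2::nat) ^ (\<Sum>s<S. l s)" using card_Y[of S l] card_Pow[of T] fT by simp
  then show ?thesis by simp
qed

end


context IC begin

definition UK where "UK = \<Union>K"
definition g where "g j = Min (THE C. C \<in> K \<and> j \<in> C)"
definition bit where "bit x j = (if j \<in> UK then x j \<noteq> x (g j) else x j)"
definition P where "P s = {j \<in> T. j \<in> M s}"
definition PL where "PL s = sorted_list_of_set (P s)"
definition Ec where "Ec s x = map (bit x) (PL s)"
definition lk where "lk cws j = the (map_of (zip (PL (own j)) (cws ! own j)) j)"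
definition Dc where "Dc i cws xi j = (if j \<in> UK then
   (let xr = (if i = g j then xi else (xi \<noteq> lk cws i)) in if j = g j then xr else (lk cws j \<noteq> xr))
   else lk cws j)"
definition lc where "lc s = card (P s)"

lemma g_eq: assumes "C \<in> K" "j \<in> C" shows "g j = Min C"
proof -
  have "(THE C. C \<in> K \<and> j \<in> C) = C"
    by (rule the_equality) (use assms K_disj in auto)
  then show ?thesis unfolding g_def by simp
qed

lemma T_lt: "j \<in> T \<Longrightarrow> j < n" unfolding T_def NL_def by auto
lemma T_fin: "finite T" unfolding T_def using NL_fin by auto
lemma P_fin: "finite (P s)" unfolding P_def using T_fin by auto

lemma K_sub: "C \<in> K \<Longrightarrow> C \<subseteq> {0..<n}"
  unfolding K_def is_leaf_scc_def is_scc_def by simp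

lemma K_lt: "C \<in> K \<Longrightarrow> j \<in> C \<Longrightarrow> j < n"
  using K_sub by fastforce

lemma set_PL: "set (PL s) = P s" unfolding PL_def using P_fin by simp

lemma lk_ok: assumes "k \<in> T" shows "lk (cw Ec x) k = bit x k"
proof -
  have kn: "k < n" using T_lt assms by simp
  have o: "own k < S" "k \<in> M (own k)" using own[OF kn] by auto
  have "cw Ec x ! own k = Ec (own k) x" unfolding cw_def using o by simp
  moreover have "k \<in> set (PL (own k))" unfolding set_PL P_def using assms o by simp
  ultimately show ?thesis unfolding lk_def Ec_def by (simp add: map_of_zip_map)
qed

lemma dep_ok: assumes s: "s < S" and xy: "\<forall>j\<in>M s. x j = y j" shows "Ec s x = Ec s y"
  unfolding Ec_def
proof (rule map_cong[OF refl])
  fix j assume "j \<in> set (PL s)"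
  then have j: "j \<in> T" "j \<in> M s" unfolding set_PL P_def by auto
  show "bit x j = bit y j"
  proof (cases "j \<in> UK")
    case True
    then obtain C where C: "C \<in> K" "j \<in> C" unfolding UK_def by auto
    have gj: "g j = Min C" using g_eq[OF C] .
    have mn: "Min C < n" using K_lt[OF C(1) Min_K[OF C(1)]] .
    have "own j = s" using own_eq[OF s j(2)] .
    moreover have "own j = own (Min C)" using K_own[OF C] .
    ultimately have "Min C \<in> M s" using own[OF mn] by simp
    then show ?thesis unfolding bit_def using True xy j gj by simp
  next
    case False
    then show ?thesis unfolding bit_def using xy j by simp
  qed
qed

lemma R_UK: "R \<subseteq> UK" unfolding R_def UK_def using Min_K by auto

lemma in_T: assumes "C \<in> K" "i \<in> C" "i \<noteq> Min C" shows "i \<in> T"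
proof -
  have "i \<in> NL" using leaf_NL assms unfolding K_def by auto
  moreover have "i \<notin> R"
  proof
    assume "i \<in> R"
    then obtain C' where C': "C' \<in> K" "i = Min C'" unfolding R_def by auto
    then have "i \<in> C'" using Min_K by simp
    then have "C' = C" using K_disj[OF C'(1) assms(1)] assms(2) by simp
    then show False using C' assms(3) by simp
  qed
  ultimately show ?thesis unfolding T_def by simp
qed

lemma dec_ok: assumes i: "i < n" and ji: "(j, i) \<in> A"
  shows "Dc i (cw Ec x) (x i) j = x j"
proof -
  have jn: "j \<in> NL" using ji arc_lt unfolding NL_def by auto
  show ?thesis
  proof (cases "j \<in> UK")
    case False
    then have "j \<in> T" using jn R_UK unfolding T_def by auto
    then show ?thesis unfolding Dc_def using False lk_ok bit_def by simp
  next
    case True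
    then obtain C where C: "C \<in> K" "j \<in> C" unfolding UK_def by auto
    have iC: "i \<in> C" using C ji unfolding K_def is_leaf_scc_def by auto
    have gj: "g j = Min C" using g_eq[OF C] .
    have gi: "g i = Min C" using g_eq[OF C(1) iC] .
    have iUK: "i \<in> UK" using C iC unfolding UK_def by auto
    define xr where "xr = (if i = g j then x i else (x i \<noteq> lk (cw Ec x) i))"
    have xr: "xr = x (Min C)"
    proof (cases "i = Min C")
      case True then show ?thesis unfolding xr_def gj by simp
    next
      case False
      then have "i \<in> T" using in_T[OF C(1) iC] by simp
      then have "lk (cw Ec x) i = (x i \<noteq> x (Min C))" using lk_ok iUK gi unfolding bit_def by simp
      then show ?thesis unfolding xr_def gj using False by auto
    qed
    have "Dc i (cw Ec x) (x i) j = (if j = g j then xr else (lk (cw Ec x) j \<noteq> xr))"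
      unfolding Dc_def xr_def using True by (simp add: Let_def)
    also have "\<dots> = x j"
    proof (cases "j = Min C")
      case True then show ?thesis using xr gj by simp
    next
      case False
      then have "j \<in> T" using in_T[OF C] by simp
      then have "lk (cw Ec x) j = (x j \<noteq> x (Min C))" using lk_ok True gj unfolding bit_def by simp
      then show ?thesis using False gj xr by auto
    qed
    finally show ?thesis .
  qed
qed

lemma code_ok: "is_index_code n A S M lc Ec Dc"
  unfolding is_index_code_def
proof (intro conjI allI impI ballI)
  fix s and x :: "nat \<Rightarrow> bool" assume "s < S"
  show "length (Ec s x) = lc s" unfolding Ec_def lc_def PL_def by simp
next
  fix s and x y :: "nat \<Rightarrow> bool" assume "s < S" "\<forall>j\<in>M s. x j = y j"
  then show "Ec s x = Ec s y" by (rule dep_ok)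
next
  fix i j and x :: "nat \<Rightarrow> bool" assume "i < n" "(j, i) \<in> A"
  then show "Dc i (map (\<lambda>s. Ec s x) [0..<S]) (x i) j = x j" using dec_ok unfolding cw_def by simp
qed

lemma sum_lc: "(\<Sum>s<S. lc s) = card T"
proof -
  have U: "(\<Union>s\<in>{..<S}. P s) = T"
  proof (intro set_eqI iffI)
    fix j assume "j \<in> (\<Union>s\<in>{..<S}. P s)" then show "j \<in> T" unfolding P_def by auto
  next
    fix j assume j: "j \<in> T"
    then have "own j < S" "j \<in> M (own j)" using own T_lt by auto
    then show "j \<in> (\<Union>s\<in>{..<S}. P s)" unfolding P_def using j by auto
  qed
  have disj: "\<forall>s\<in>{..<S}. \<forall>t\<in>{..<S}. s \<noteq> t \<longrightarrow> P s \<inter> P t = {}"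
  proof (intro ballI impI)
    fix s t assume st: "s \<in> {..<S}" "t \<in> {..<S}" "s \<noteq> t"
    show "P s \<inter> P t = {}"
    proof (rule ccontr)
      assume "P s \<inter> P t \<noteq> {}"
      then obtain j where "j \<in> M s" "j \<in> M t" unfolding P_def by auto
      then have "own j = s" "own j = t" using own_eq st by auto
      then show False using st by simp
    qed
  qed
  have "card (\<Union>s\<in>{..<S}. P s) = (\<Sum>s<S. card (P s))"
    by (rule card_UN_disjoint) (use disj P_fin in auto)
  then show ?thesis unfolding lc_def U by simp
qed

lemma result: "min_index_code_length n A S M = V_out n A - N_conn n A S M"
proof -
  have ach: "index_code_length_achievable n A S M (card T)"
    unfolding index_code_length_achievable_def using code_ok sum_lc by auto
  have "min_index_code_length n A S M = card T"
    unfolding min_index_code_length_def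
  proof (rule Least_equality)
    show "index_code_length_achievable n A S M (card T)" using ach .
  next
    fix L assume "index_code_length_achievable n A S M L"
    then obtain l E D where "is_index_code n A S M l E D" "(\<Sum>s<S. l s) = L"
      unfolding index_code_length_achievable_def by auto
    then show "card T \<le> L" using lower by auto
  qed
  then show ?thesis using card_T by simp
qed

end


theorem corollary3:
  fixes n S :: nat and A :: "(nat \<times> nat) set" and M :: "nat \<Rightarrow> nat set"
  assumes arcs: "A \<subseteq> {0..<n} \<times> {0..<n}"
    and no_loops: "\<forall>i. (i, i) \<notin> A"
    and senders: "\<forall>s<S. M s \<subseteq> {0..<n}"
    and partition: "\<forall>j<n. \<exists>!s. s < S \<and> j \<in> M s"
  shows "min_index_code_length n A S M = V_out n A - N_conn n A S M"
proof -
  have "IC n S A M" using arcs no_loops senders partition by (simp add: IC_def)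
  then show ?thesis by (rule IC.result)
qed

end
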